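(* In the setting of the adaptive implicit-explicit iteration described in the context, the generated sequence $\{(\lambda_k,\bm d_k)\}_{k\ge0}$ satisfies, for every $k\ge0$, $\lambda_k\ge0$, $\|\bm d_k\|_2\le r$, and $\lambda_k(\|\bm d_k\|_2-r)=0$.
   Context: Let $n\ge1$, $r>0$, $\bm g\in\mathbb R^n$ with $\bm g\neq0$, and $\bm H=\bm D+\bm T\in\mathbb R^{n\times n}$, where $\bm D$ is diagonal with nonnegative diagonal entries $D_{i,i}$ and $\bm T$ is symmetric. (In the paper, $\bm D$ and $\bm T$ are the parts of the Hessian of the discretized Landau–Brazovskii energy coming from the interaction and the bulk terms.) Let $f(\bm d)=\bm g^\top\bm d+\frac12\bm d^\top\bm H\bm d$, and consider the trust region subproblem $\min_{\|\bm d\|_2\le r}f(\bm d)$. Adaptive implicit-explicit iteration with step size $\eta>0$: set $\bm d_0=-r\bm g/\|\bm g\|_2$ and $\lambda_0=0$. For $k=0,1,2,\dots$ (run indefinitely): let $\bm b_k=\bm d_k-\eta(\bm g+\bm T\bm d_k)$ and $\phi_k(\lambda)=\sum_{i=1}^n\big([\bm b_k]_i/(1+\eta(D_{i,i}+\lambda))\big)^2$ for $\lambda\ge0$; set $\lambda_{k+1}=0$ if $\phi_k(0)\le r^2$, and otherwise let $\lambda_{k+1}>0$ be the (unique) solution of $\phi_k(\lambda)=r^2$; then $\bm d_{k+1}=(\bm I+\eta(\bm D+\lambda_{k+1}\bm I))^{-1}\bm b_k$. *)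

theory Defs
  imports "HOL-Analysis.Analysis"
begin

definition aie_phi :: "real^'n^'n \<Rightarrow> real \<Rightarrow> real^'n \<Rightarrow> real \<Rightarrow> real" where
  "aie_phi D eta b lam = (\<Sum>i\<in>UNIV. (b $ i / (1 + eta * (D $ i $ i + lam)))^2)"

fun aie_iter :: "real^'n \<Rightarrow> real^'n^'n \<Rightarrow> real^'n^'n \<Rightarrow> real \<Rightarrow> real \<Rightarrow> nat \<Rightarrow> real \<times> (real^'n)" where
  "aie_iter g D T eta r 0 = (0, - ((r / norm g) *\<^sub>R g))"
| "aie_iter g D T eta r (Suc k) =
    (let d = snd (aie_iter g D T eta r k);
         b = d - eta *\<^sub>R (g + T *v d);
         lam' = (if aie_phi D eta b 0 \<le> r^2 then 0
                 else (THE lam. lam > 0 \<and> aie_phi D eta b lam = r^2))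
     in (lam', matrix_inv (mat 1 + eta *\<^sub>R (D + lam' *\<^sub>R mat 1)) *v b))"

end

theory Submission
  imports Defs
begin

lemma diag_inv_mult:
  fixes M :: "real^'n^'n"
  assumes M: "\<And>i j. M$i$j = (if i = j then c i else 0)" and c: "\<And>i. c i \<noteq> 0"
  shows "matrix_inv M *v b = (\<chi> i. b$i / c i)"
proof -
  define N :: "real^'n^'n" where "N = (\<chi> i j. if i = j then 1 / c i else 0)"
  have MN: "M ** N = mat 1"
    by (simp add: matrix_matrix_mult_def N_def M mat_def vec_eq_iff c if_distrib[of "\<lambda>x. x * _"] cong: if_cong)
  have NM: "N ** M = mat 1"
    by (simp add: matrix_matrix_mult_def N_def M mat_def vec_eq_iff c if_distrib[of "\<lambda>x. x * _"] cong: if_cong)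
  have inv: "invertible M" unfolding invertible_def using MN NM by blast
  have "matrix_inv M = mat 1 ** matrix_inv M" by simp
  also have "\<dots> = (N ** M) ** matrix_inv M" using NM by simp
  also have "\<dots> = N ** (M ** matrix_inv M)" by (simp add: matrix_mul_assoc)
  also have "\<dots> = N"
  proof -
    have "M ** matrix_inv M = mat 1 \<and> matrix_inv M ** M = mat 1"
      unfolding matrix_inv_def by (rule someI[of _ N]) (use MN NM in blast)
    then show ?thesis by simp
  qed
  finally have "matrix_inv M = N" .
  then show ?thesis
    by (simp add: matrix_vector_mult_def N_def vec_eq_iff if_distrib[of "\<lambda>x. x * _"] cong: if_cong)
qed

lemma norm_sq_vec: "(norm (x::real^'n))^2 = (\<Sum>i\<in>UNIV. (x$i)^2)"
proof -
  have "(norm x)^2 = inner x x" by (simp add: dot_square_norm)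
  then show ?thesis by (simp add: inner_vec_def power2_eq_square)
qed

lemma phi_root:
  fixes D :: "real^'n^'n"
  assumes eta: "eta > 0" and Dn: "\<forall>i. D $ i $ i \<ge> 0" and r: "r > 0"
    and big: "aie_phi D eta b 0 > r^2"
  shows "\<exists>!lam. lam > 0 \<and> aie_phi D eta b lam = r^2"
proof -
  have cpos: "1 + eta * (D$i$i + x) \<ge> 1 + eta * x" if "x \<ge> 0" for i x
    using Dn eta by (simp add: mult_left_mono)
  have bnz: "\<exists>i. b$i \<noteq> 0"
  proof (rule ccontr)
    assume "\<not> ?thesis"
    then have "aie_phi D eta b 0 = 0" by (simp add: aie_phi_def)
    with big r show False by (smt (verit) zero_less_power)
  qed
  have strict: "aie_phi D eta b y < aie_phi D eta b x" if "0 \<le> x" "x < y" for x y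
    unfolding aie_phi_def
  proof (rule sum_strict_mono_ex1)
    have le: "(b$i / (1 + eta * (D$i$i + y)))^2 \<le> (b$i / (1 + eta * (D$i$i + x)))^2
         \<and> (b$i \<noteq> 0 \<longrightarrow> (b$i / (1 + eta * (D$i$i + y)))^2 < (b$i / (1 + eta * (D$i$i + x)))^2)" for i
    proof -
      have p1: "1 + eta * (D$i$i + x) > 0" using cpos[of x i] that eta by (smt (verit) mult_nonneg_nonneg)
      have lt: "1 + eta * (D$i$i + x) < 1 + eta * (D$i$i + y)" using that eta by simp
      have e: "(b$i / z)^2 = (b$i)^2 / z^2" for z by (simp add: power_divide)
      have p2: "0 < (1 + eta * (D$i$i + y))^2 * (1 + eta * (D$i$i + x))^2"
        using p1 lt by (intro mult_pos_pos) auto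
      have sq: "(1 + eta * (D$i$i + x))^2 < (1 + eta * (D$i$i + y))^2"
        using p1 lt by (simp add: power_strict_mono)
      have "(b$i)^2 / (1 + eta * (D$i$i + y))^2 \<le> (b$i)^2 / (1 + eta * (D$i$i + x))^2"
        by (rule divide_left_mono[OF less_imp_le[OF sq] zero_le_power2 p2])
      moreover have "b$i \<noteq> 0 \<Longrightarrow> (b$i)^2 / (1 + eta * (D$i$i + y))^2 < (b$i)^2 / (1 + eta * (D$i$i + x))^2"
        by (intro divide_strict_left_mono[OF sq _ p2]) simp
      ultimately show ?thesis by (simp add: e)
    qed
    show "\<forall>i\<in>UNIV. (b$i / (1 + eta * (D$i$i + y)))^2 \<le> (b$i / (1 + eta * (D$i$i + x)))^2"
      using le by blast
    show "\<exists>i\<in>UNIV. (b$i / (1 + eta * (D$i$i + y)))^2 < (b$i / (1 + eta * (D$i$i + x)))^2"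
      using le bnz by blast
  qed simp
  define S where "S = (\<Sum>i\<in>UNIV. (b$i)^2)"
  have S0: "S \<ge> 0" unfolding S_def by (simp add: sum_nonneg)
  define L where "L = (S / r^2) / eta"
  have L0: "L \<ge> 0" using S0 eta r unfolding L_def by simp
  define t where "t = 1 + eta * L"
  have tS: "t = 1 + S / r^2" using eta unfolding t_def L_def by simp
  have t1: "t \<ge> 1" using tS S0 r by simp
  have "aie_phi D eta b L \<le> (\<Sum>i\<in>UNIV. (b$i)^2 / t)"
    unfolding aie_phi_def
  proof (rule sum_mono)
    fix i
    have c: "1 + eta * (D$i$i + L) \<ge> t" using cpos[OF L0] t_def by simp
    have "(b$i / (1 + eta * (D$i$i + L)))^2 = (b$i)^2 / (1 + eta * (D$i$i + L))^2"
      by (simp add: power_divide)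
    also have "\<dots> \<le> (b$i)^2 / t^2"
      using c t1 by (intro divide_left_mono power_mono) auto
    also have "\<dots> \<le> (b$i)^2 / t"
      using t1 by (intro divide_left_mono) (auto simp: power2_eq_square)
    finally show "(b$i / (1 + eta * (D$i$i + L)))^2 \<le> (b$i)^2 / t" .
  qed
  also have "\<dots> = S / t" unfolding S_def by (simp add: sum_divide_distrib)
  also have "\<dots> \<le> r^2"
  proof -
    have "S \<le> r^2 * t" using tS r by (simp add: field_simps)
    then show ?thesis using t1 by (simp add: divide_le_eq mult.commute)
  qed
  finally have PL: "aie_phi D eta b L \<le> r^2" .
  have cont: "\<forall>x. 0 \<le> x \<and> x \<le> L \<longrightarrow> isCont (aie_phi D eta b) x"
  proof (intro allI impI)
    fix x assume x: "0 \<le> x \<and> x \<le> L"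
    have nz: "1 + eta * (D$i$i + x) \<noteq> 0" for i using cpos[of x i] x eta
      by (smt (verit) mult_nonneg_nonneg)
    show "isCont (aie_phi D eta b) x"
      unfolding aie_phi_def[abs_def] by (intro continuous_intros) (use nz in auto)
  qed
  obtain x where x: "0 \<le> x" "x \<le> L" "aie_phi D eta b x = r^2"
    using IVT2[of "aie_phi D eta b" L "r^2" 0] PL big L0 cont by auto
  have xp: "x > 0" using x big by (cases "x = 0") auto
  show ?thesis
  proof (rule ex1I[of _ x])
    show "x > 0 \<and> aie_phi D eta b x = r^2" using xp x by simp
    fix y assume y: "y > 0 \<and> aie_phi D eta b y = r^2"
    show "y = x"
    proof (rule ccontr)
      assume "y \<noteq> x"
      then consider "y < x" | "x < y" by linarith
      then show False using strict[of y x] strict[of x y] x y xp by (cases; auto)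
    qed
  qed
qed

theorem mainTheorem3:
  fixes g :: "real^'n" and D T :: "real^'n^'n" and r eta :: real
  assumes r_pos: "r > 0"
    and g_nz: "g \<noteq> 0"
    and eta_pos: "eta > 0"
    and D_diag: "\<forall>i j. i \<noteq> j \<longrightarrow> D $ i $ j = 0"
    and D_nonneg: "\<forall>i. D $ i $ i \<ge> 0"
    and T_symm: "transpose T = T"
  shows "\<forall>k. fst (aie_iter g D T eta r k) \<ge> 0
           \<and> norm (snd (aie_iter g D T eta r k)) \<le> r
           \<and> fst (aie_iter g D T eta r k) * (norm (snd (aie_iter g D T eta r k)) - r) = 0"
proof
  fix k
  show "fst (aie_iter g D T eta r k) \<ge> 0
           \<and> norm (snd (aie_iter g D T eta r k)) \<le> r
           \<and> fst (aie_iter g D T eta r k) * (norm (snd (aie_iter g D T eta r k)) - r) = 0"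
  proof (cases k)
    case 0
    have "norm (- ((r / norm g) *\<^sub>R g)) = r" using g_nz r_pos by simp
    then show ?thesis using 0 by simp
  next
    case (Suc m)
    define d where "d = snd (aie_iter g D T eta r m)"
    define b where "b = d - eta *\<^sub>R (g + T *v d)"
    define lam where "lam = (if aie_phi D eta b 0 \<le> r^2 then 0
                 else (THE lam. lam > 0 \<and> aie_phi D eta b lam = r^2))"
    have it: "aie_iter g D T eta r k = (lam, matrix_inv (mat 1 + eta *\<^sub>R (D + lam *\<^sub>R mat 1)) *v b)"
      using Suc by (simp add: Let_def d_def b_def lam_def)
    have lamprop: "lam \<ge> 0 \<and> (lam = 0 \<and> aie_phi D eta b 0 \<le> r^2 \<or> lam > 0 \<and> aie_phi D eta b lam = r^2)"
    proof (cases "aie_phi D eta b 0 \<le> r^2")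
      case True then show ?thesis by (simp add: lam_def)
    next
      case False
      then have ex: "\<exists>!l. l > 0 \<and> aie_phi D eta b l = r^2"
        using phi_root[OF eta_pos D_nonneg r_pos] by simp
      have "lam > 0 \<and> aie_phi D eta b lam = r^2"
        unfolding lam_def using False theI'[OF ex] by simp
      then show ?thesis by simp
    qed
    define c where "c i = 1 + eta * (D$i$i + lam)" for i
    have cpos: "c i > 0" for i using lamprop D_nonneg eta_pos unfolding c_def
      by (smt (verit) mult_nonneg_nonneg)
    have Mij: "(mat 1 + eta *\<^sub>R (D + lam *\<^sub>R mat 1)) $ i $ j = (if i = j then c i else 0)" for i j
      using D_diag by (auto simp: c_def mat_def)
    have dv: "matrix_inv (mat 1 + eta *\<^sub>R (D + lam *\<^sub>R mat 1)) *v b = (\<chi> i. b$i / c i)"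
      by (rule diag_inv_mult[OF Mij]) (use cpos in \<open>simp add: less_imp_neq[symmetric]\<close>)
    have nsq: "(norm (\<chi> i. b$i / c i))^2 = aie_phi D eta b lam"
      by (simp add: norm_sq_vec aie_phi_def c_def)
    have "norm (\<chi> i. b$i / c i) \<le> r \<and> lam * (norm (\<chi> i. b$i / c i) - r) = 0"
    proof (cases "lam = 0")
      case True
      then have "(norm (\<chi> i. b$i / c i))^2 \<le> r^2" using nsq lamprop by auto
      then have "norm (\<chi> i. b$i / c i) \<le> r" using r_pos by (simp add: power2_le_iff_abs_le)
      then show ?thesis using True by simp
    next
      case False
      then have "(norm (\<chi> i. b$i / c i))^2 = r^2" using nsq lamprop by auto
      then have "norm (\<chi> i. b$i / c i) = r" using r_pos
        by (metis norm_ge_zero order_less_imp_le power2_eq_iff_nonneg)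
      then show ?thesis by simp
    qed
    then show ?thesis using it dv lamprop by simp
  qed
qed

end
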